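(* Let $m,p,n$ be positive integers with $p\mid m$ and $n>1$, and let $\boldsymbol\theta=(\theta_1,\dots,\theta_n)$ be the basic polynomial map of $G(m,p,n)$ described in the context. Consider the map $\pi:\mathbb C^n\to\mathbb C^{n-1}$, $\pi(z_1,\ldots,z_n)=(\gamma_1z_1,\ldots,\gamma_{n-1}z_{n-1})$ with $\gamma_i=\frac{n-i}{n}$, $i=1,\ldots,n-1$. Then $\pi(\overline{\boldsymbol\Theta}_n)\subseteq\Gamma_{n-1}$.
   Context: Put $q=m/p$. $G(m,p,n)$ is the group of $n\times n$ monomial matrices whose nonzero entries are $m$-th roots of unity and whose product of nonzero entries is an $(m/p)$-th root of unity. Let $s_i$ denote the $i$-th elementary symmetric polynomial. For $1\le i\le n-1$, $\theta_i(z)=s_i(z_1^m,\ldots,z_n^m)$, and $\theta_n(z)=(z_1\cdots z_n)^q$. Put $\boldsymbol\Theta_n=\boldsymbol\theta(\mathbb D^n)$, so that $\overline{\boldsymbol\Theta}_n=\boldsymbol\theta(\overline{\mathbb D}^n)$. For $k\ge1$, $\Gamma_k=\boldsymbol s(\overline{\mathbb D}^k)$ is the closed symmetrized polydisc, where $\boldsymbol s=(s_1,\dots,s_k)$ on $\mathbb C^k$. *)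

theory Defs
  imports "HOL-Analysis.Analysis"
begin

text \<open>Points of C^k are represented as complex lists of length k.
  Coordinate z_j (1-based) is z ! (j-1).\<close>

definition esym :: "nat \<Rightarrow> complex list \<Rightarrow> complex" where
  "esym i z = (\<Sum>S\<in>{S. S \<subseteq> {0..<length z} \<and> card S = i}. \<Prod>j\<in>S. z ! j)"

definition closed_polydisc :: "nat \<Rightarrow> complex list set" where
  "closed_polydisc k = {z. length z = k \<and> (\<forall>x\<in>set z. norm x \<le> 1)}"

definition symmap :: "nat \<Rightarrow> complex list \<Rightarrow> complex list" where
  "symmap k z = map (\<lambda>i. esym i z) [1..<k+1]"

definition Gamma_sym :: "nat \<Rightarrow> complex list set" where
  "Gamma_sym k = symmap k ` closed_polydisc k"

definition theta :: "nat \<Rightarrow> nat \<Rightarrow> nat \<Rightarrow> complex list \<Rightarrow> complex list" where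
  "theta m p n z = map (\<lambda>i. if i < n then esym i (map (\<lambda>x. x ^ m) z)
                              else (prod_list z) ^ (m div p)) [1..<n+1]"

text \<open>Closure of Theta_n, i.e. theta of the closed polydisc.\<close>
definition Theta_closed :: "nat \<Rightarrow> nat \<Rightarrow> nat \<Rightarrow> complex list set" where
  "Theta_closed m p n = theta m p n ` closed_polydisc n"

definition proj_pi :: "nat \<Rightarrow> complex list \<Rightarrow> complex list" where
  "proj_pi n z = map (\<lambda>i. complex_of_real ((real n - real i) / real n) * z ! (i - 1)) [1..<n]"

end

theory Submission imports Defs "HOL-Computational_Algebra.Fundamental_Theorem_Algebra" begin

definition E :: "nat \<Rightarrow> nat set \<Rightarrow> (nat \<Rightarrow> complex) \<Rightarrow> complex" where
  "E i A f = (\<Sum>S\<in>{S. S \<subseteq> A \<and> card S = i}. \<Prod>j\<in>S. f j)"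

lemma esym_E: "esym i z = E i {0..<length z} (\<lambda>j. z ! j)"
  by (simp add: esym_def E_def)

lemma E_0: "finite A \<Longrightarrow> E 0 A f = 1"
proof -
  assume "finite A"
  then have "{S. S \<subseteq> A \<and> card S = 0} = {{}}"
    by (auto simp: card_eq_0_iff dest: finite_subset)
  then show ?thesis by (simp add: E_def)
qed

lemma E_big: "finite A \<Longrightarrow> card A < i \<Longrightarrow> E i A f = 0"
proof -
  assume fin: "finite A" and c: "card A < i"
  have "{S. S \<subseteq> A \<and> card S = i} = {}"
  proof (rule equals0I)
    fix S assume "S \<in> {S. S \<subseteq> A \<and> card S = i}"
    then have S: "S \<subseteq> A" "card S = i" by simp_all
    have "card S \<le> card A" by (rule card_mono[OF fin S(1)])
    then show False using S(2) c by simp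
  qed
  then show ?thesis unfolding E_def by (simp only: sum.empty)
qed

lemma E_insert:
  assumes "finite A" "x \<notin> A"
  shows "E (Suc i) (insert x A) f = E (Suc i) A f + f x * E i A f"
proof -
  have split: "{S. S \<subseteq> insert x A \<and> card S = Suc i} =
     {S. S \<subseteq> A \<and> card S = Suc i} \<union> insert x ` {S. S \<subseteq> A \<and> card S = i}"
  proof (rule set_eqI, rule iffI)
    fix S assume "S \<in> {S. S \<subseteq> insert x A \<and> card S = Suc i}"
    then have S: "S \<subseteq> insert x A" "card S = Suc i" by auto
    show "S \<in> {S. S \<subseteq> A \<and> card S = Suc i} \<union> insert x ` {S. S \<subseteq> A \<and> card S = i}"
    proof (cases "x \<in> S")
      case True
      then have "S = insert x (S - {x})" by auto
      moreover have "card (S - {x}) = i" using S True by (simp add: card_Diff_singleton)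
      moreover have "S - {x} \<subseteq> A" using S by auto
      ultimately show ?thesis by blast
    next
      case False
      then show ?thesis using S by auto
    qed
  next
    fix S assume "S \<in> {S. S \<subseteq> A \<and> card S = Suc i} \<union> insert x ` {S. S \<subseteq> A \<and> card S = i}"
    then show "S \<in> {S. S \<subseteq> insert x A \<and> card S = Suc i}"
    proof
      assume "S \<in> insert x ` {S. S \<subseteq> A \<and> card S = i}"
      then obtain T where "S = insert x T" "T \<subseteq> A" "card T = i" by auto
      moreover have "finite T" using \<open>T \<subseteq> A\<close> assms(1) finite_subset by blast
      moreover have "x \<notin> T" using \<open>T \<subseteq> A\<close> assms(2) by blast
      ultimately show ?thesis by auto
    qed auto
  qed
  have fin1: "finite {S. S \<subseteq> A \<and> card S = Suc i}" using assms(1) by simp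
  have fin2: "finite (insert x ` {S. S \<subseteq> A \<and> card S = i})" using assms(1) by simp
  have disj: "{S. S \<subseteq> A \<and> card S = Suc i} \<inter> insert x ` {S. S \<subseteq> A \<and> card S = i} = {}"
    using assms(2) by auto
  have inj: "inj_on (insert x) {S. S \<subseteq> A \<and> card S = i}"
    using assms(2) unfolding inj_on_def by (metis Diff_insert_absorb in_mono mem_Collect_eq)
  have "E (Suc i) (insert x A) f = E (Suc i) A f + (\<Sum>S\<in>insert x ` {S. S \<subseteq> A \<and> card S = i}. \<Prod>j\<in>S. f j)"
    unfolding E_def split by (rule sum.union_disjoint[OF fin1 fin2 disj])
  also have "(\<Sum>S\<in>insert x ` {S. S \<subseteq> A \<and> card S = i}. \<Prod>j\<in>S. f j)
     = (\<Sum>T\<in>{S. S \<subseteq> A \<and> card S = i}. \<Prod>j\<in>insert x T. f j)"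
    by (rule sum.reindex_cong[OF inj]) auto
  also have "\<dots> = (\<Sum>T\<in>{S. S \<subseteq> A \<and> card S = i}. f x * (\<Prod>j\<in>T. f j))"
  proof (rule sum.cong[OF refl])
    fix T assume "T \<in> {S. S \<subseteq> A \<and> card S = i}"
    then have "finite T" "x \<notin> T" using assms finite_subset by auto
    then show "(\<Prod>j\<in>insert x T. f j) = f x * (\<Prod>j\<in>T. f j)" by simp
  qed
  also have "\<dots> = f x * E i A f" by (simp add: E_def sum_distrib_left)
  finally show ?thesis .
qed

lemma coeff_prod_lin:
  assumes "finite A"
  shows "coeff (\<Prod>j\<in>A. [:f j, 1:]) k = (if k \<le> card A then E (card A - k) A f else 0)"
  using assms
proof (induction A arbitrary: k rule: finite_induct)
  case empty
  then show ?case by (cases k) (auto simp: E_0)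
next
  case (insert x A)
  have P: "(\<Prod>j\<in>insert x A. [:f j, 1:]) = [:f x, 1:] * (\<Prod>j\<in>A. [:f j, 1:])"
    using insert by simp
  have c: "coeff (\<Prod>j\<in>insert x A. [:f j, 1:]) k =
      f x * coeff (\<Prod>j\<in>A. [:f j, 1:]) k + (case k of 0 \<Rightarrow> 0 | Suc k' \<Rightarrow> coeff (\<Prod>j\<in>A. [:f j, 1:]) k')"
    unfolding P by (simp add: coeff_pCons split: nat.split)
  have cA: "card (insert x A) = Suc (card A)" using insert by simp
  show ?case
  proof (cases k)
    case 0
    then show ?thesis using c cA insert by (simp add: E_big E_insert)
  next
    case (Suc k')
    show ?thesis
    proof (cases "k' < card A")
      case True
      then obtain i where i: "card A - k' = Suc i" by (metis Suc_diff_Suc)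
      have "card A - k = i" using i Suc by simp
      then show ?thesis using c cA insert Suc True i by (simp add: E_insert)
    next
      case False
      then show ?thesis using c cA insert Suc by (auto simp: E_0)
    qed
  qed
qed


lemma monic_factor:
  fixes p :: "complex poly"
  assumes "lead_coeff p = 1"
  shows "\<exists>u. length u = degree p \<and> p = (\<Prod>k\<in>{0..<length u}. [:u!k, 1:]) \<and> (\<forall>a\<in>set u. poly p (-a) = 0)"
  using assms
proof (induction "degree p" arbitrary: p)
  case 0
  then have "p = 1" using degree_0_id[of p] by (simp add: one_pCons)
  then show ?case by (intro exI[of _ "[]"]) simp
next
  case (Suc d)
  have "\<not> (\<exists>a l. a \<noteq> 0 \<and> l = 0 \<and> p = pCons a l)"
    using Suc(2) by auto
  then obtain r where r: "poly p r = 0" using fundamental_theorem_of_algebra_alt by blast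
  then have "[:-r, 1:] dvd p" by (simp add: poly_eq_0_iff_dvd)
  then obtain q where q: "p = [:-r, 1:] * q" by (elim dvdE)
  have "p \<noteq> 0" using Suc(3) by auto
  then have qn: "q \<noteq> 0" using q by auto
  have "degree p = degree [:-r,1:] + degree q" unfolding q by (rule degree_mult_eq) (simp_all add: qn)
  then have dq: "degree p = Suc (degree q)" by simp
  have "lead_coeff p = lead_coeff [:-r,1:] * lead_coeff q" unfolding q by (rule lead_coeff_mult)
  then have lq: "lead_coeff q = 1" using Suc(3) by simp
  have dd: "d = degree q" using dq Suc(2) by simp
  obtain u where u1: "length u = degree q" and u2: "q = (\<Prod>k\<in>{0..<length u}. [:u!k, 1:])"
      and u3: "\<forall>a\<in>set u. poly q (-a) = 0"
    using Suc(1)[OF dd lq] by blast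
  show ?case
  proof (intro exI[of _ "(-r) # u"] conjI)
    show "length ((-r) # u) = degree p" using u1 dq by simp
    have "(\<Prod>k\<in>{0..<length ((-r) # u)}. [:((-r) # u)!k, 1:]) = [:((-r) # u)!0, 1:] * (\<Prod>k\<in>{0..<length u}. [:((-r) # u)!(Suc k), 1:])"
      unfolding length_Cons by (simp only: prod.atLeast0_lessThan_Suc_shift o_def)
    also have "\<dots> = [:-r, 1:] * (\<Prod>k\<in>{0..<length u}. [:u!k, 1:])" by (simp only: nth_Cons_0 nth_Cons_Suc)
    also have "\<dots> = p" using q u2 by simp
    finally show "p = (\<Prod>k\<in>{0..<length ((-r) # u)}. [:((-r) # u)!k, 1:])" by simp
    show "\<forall>a\<in>set ((-r) # u). poly p (-a) = 0"
    proof
      fix a assume "a \<in> set ((-r) # u)"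
      then have "a = -r \<or> a \<in> set u" by simp
      then show "poly p (-a) = 0"
      proof
        assume "a = -r" then show ?thesis using r by simp
      next
        assume "a \<in> set u" then have "poly q (-a) = 0" using u3 by blast
        then show ?thesis unfolding q by (simp only: poly_mult mult_zero_right)
      qed
    qed
  qed
qed

lemma Re_pos:
  fixes t w :: complex
  assumes "norm w \<le> 1" "1 < norm t"
  shows "0 < Re (t / (t + w))"
proof -
  have t0: "t \<noteq> 0" using assms by auto
  define v where "v = w / t"
  have nv: "norm v < 1" using assms t0 by (simp add: v_def norm_divide divide_less_eq)
  have eq: "t / (t + w) = 1 / (1 + v)" using t0 by (simp add: v_def field_simps)
  have "- Re v \<le> norm v" using abs_Re_le_cmod[of v] by linarith
  then have re: "0 < Re (1 + v)" using nv by simp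
  have "1 + v \<noteq> 0"
  proof
    assume "1 + v = 0"
    then have "Re (1 + v) = 0" by simp
    with re show False by simp
  qed
  then have "0 < (norm (1 + v))\<^sup>2" by simp
  then show ?thesis unfolding eq Re_divide' using re by simp
qed

lemma deriv_root_bound:
  fixes w :: "nat \<Rightarrow> complex"
  assumes fin: "finite A" and ne: "A \<noteq> {}" and w: "\<forall>j\<in>A. norm (w j) \<le> 1"
    and root: "poly (pderiv (\<Prod>j\<in>A. [:w j, 1:])) t = 0"
  shows "norm t \<le> 1"
proof (rule ccontr)
  assume "\<not> norm t \<le> 1"
  then have t1: "1 < norm t" by simp
  have nz: "t + w j \<noteq> 0" if "j \<in> A" for j
  proof
    assume "t + w j = 0"
    then have "t = - w j" by (simp add: eq_neg_iff_add_eq_0)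
    then show False using w that t1 by auto
  qed
  have "poly (pderiv (\<Prod>j\<in>A. [:w j, 1:])) t = (\<Sum>a\<in>A. \<Prod>j\<in>A - {a}. (t + w j))"
    by (simp add: pderiv_prod poly_sum poly_prod pderiv_pCons add.commute)
  also have "\<dots> = (\<Sum>a\<in>A. (\<Prod>j\<in>A. (t + w j)) * (1 / (t + w a)))"
    by (rule sum.cong[OF refl]) (use fin nz in \<open>simp add: prod_diff1\<close>)
  also have "\<dots> = (\<Prod>j\<in>A. (t + w j)) * (\<Sum>a\<in>A. 1 / (t + w a))"
    by (simp add: sum_distrib_left)
  finally have "(\<Prod>j\<in>A. (t + w j)) * (\<Sum>a\<in>A. 1 / (t + w a)) = 0" using root by simp
  moreover have "(\<Prod>j\<in>A. (t + w j)) \<noteq> 0" using nz fin by simp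
  ultimately have s0: "(\<Sum>a\<in>A. 1 / (t + w a)) = 0" by simp
  have "Re (t * (\<Sum>a\<in>A. 1 / (t + w a))) = (\<Sum>a\<in>A. Re (t / (t + w a)))"
    by (simp add: sum_distrib_left Re_sum)
  also have "\<dots> > 0"
    using Re_pos w t1 fin ne by (intro sum_pos) auto
  finally show False using s0 by simp
qed


lemma proj_nth: assumes k: "k < n - 1" shows "proj_pi n x ! k = complex_of_real ((real n - real (Suc k)) / real n) * x ! k"
proof -
  have kl: "k < length [1..<n]" using k by simp
  have "[1..<n] ! k = Suc k" using k by (subst nth_upt) auto
  then show ?thesis unfolding proj_pi_def nth_map[OF kl] by simp
qed
lemma theta_nth: assumes sk: "Suc k < n" shows "theta m p n z ! k = esym (Suc k) (map (\<lambda>x. x ^ m) z)"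
proof -
  have kl: "k < length [1..<n+1]" using sk by simp
  have "[1..<n+1] ! k = Suc k" using sk by (subst nth_upt) auto
  then show ?thesis unfolding theta_def nth_map[OF kl] using sk by simp
qed
lemma symmap_nth: assumes k: "k < K" shows "symmap K u ! k = esym (Suc k) u"
proof -
  have kl: "k < length [1..<K + 1]" using k by simp
  have e: "[1..<K + 1] ! k = 1 + k" using k by (intro nth_upt) linarith
  show ?thesis unfolding symmap_def nth_map[OF kl] e by simp
qed
lemma proj_len: "length (proj_pi n x) = n - 1" by (simp add: proj_pi_def)
lemma symmap_len: "length (symmap k u) = k" by (simp add: symmap_def)

theorem lemma2p6:
  fixes m p n :: nat
  assumes "0 < m" and "0 < p" and "p dvd m" and "1 < n"
  shows "proj_pi n ` Theta_closed m p n \<subseteq> Gamma_sym (n - 1)"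
proof
  fix y assume "y \<in> proj_pi n ` Theta_closed m p n"
  then obtain z where z: "z \<in> closed_polydisc n" and y: "y = proj_pi n (theta m p n z)"
    unfolding Theta_closed_def by auto
  have lz: "length z = n" using z by (simp add: closed_polydisc_def)
  define w where "w = map (\<lambda>x. x ^ m) z"
  have lw: "length w = n" using lz by (simp add: w_def)
  have wn: "\<forall>j\<in>{0..<n}. norm (w ! j) \<le> 1"
  proof
    fix j assume "j \<in> {0..<n}"
    then have "z ! j \<in> set z" using lz by simp
    then have "norm (z ! j) \<le> 1" using z by (simp add: closed_polydisc_def)
    then show "norm (w ! j) \<le> 1" using \<open>j \<in> {0..<n}\<close> lz
      by (simp add: w_def norm_power power_le_one)
  qed
  define F where "F = (\<Prod>j\<in>{0..<n}. [:w ! j, 1:])"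
  define G where "G = smult (1 / of_nat n) (pderiv F)"
  have cF: "coeff F k = (if k \<le> n then esym (n - k) w else 0)" for k
    unfolding F_def by (simp add: coeff_prod_lin esym_E lw)
  have cG: "coeff G k = of_nat (Suc k) / of_nat n * coeff F (Suc k)" for k
    by (simp add: G_def coeff_pderiv)
  have n0: "(of_nat n :: complex) \<noteq> 0" using assms by simp
  have e0: "esym 0 w = 1" by (simp add: esym_E E_0)
  have cGtop: "coeff G (n - 1) = 1"
    using assms n0 by (simp add: cG cF e0)
  have "degree G = n - 1"
  proof (rule antisym)
    show "degree G \<le> n - 1" by (rule degree_le) (auto simp: cG cF)
    show "n - 1 \<le> degree G" using le_degree[of G "n - 1"] cGtop by simp
  qed
  then have lG: "lead_coeff G = 1" using cGtop by simp
  obtain u where u: "length u = degree G" "G = (\<Prod>k\<in>{0..<length u}. [:u!k, 1:])"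
      "\<forall>a\<in>set u. poly G (-a) = 0"
    using monic_factor[OF lG] by blast
  have lu: "length u = n - 1" using u \<open>degree G = n - 1\<close> by simp
  have ucl: "u \<in> closed_polydisc (n - 1)"
    unfolding closed_polydisc_def
  proof (intro CollectI conjI ballI)
    show "length u = n - 1" by (rule lu)
    fix a assume "a \<in> set u"
    then have "poly G (-a) = 0" using u by simp
    then have "poly (pderiv F) (-a) = 0" using n0 by (simp add: G_def)
    then have "norm (-a) \<le> 1" unfolding F_def
      using deriv_root_bound[of "{0..<n}" "\<lambda>j. w ! j" "-a"] wn assms by auto
    then show "norm a \<le> 1" by simp
  qed
  have key: "esym i u = complex_of_real ((real n - real i) / real n) * esym i w"
    if i: "1 \<le> i" "i < n" for i
  proof -
    have "esym i u = coeff G (n - 1 - i)"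
      using u(2) lu i by (simp add: esym_E coeff_prod_lin)
    also have "\<dots> = of_nat (n - i) / of_nat n * esym i w"
      using i by (simp add: cG cF Suc_diff_Suc)
    also have "of_nat (n - i) / of_nat n = complex_of_real ((real n - real i) / real n)"
      using i by (simp add: of_nat_diff)
    finally show ?thesis .
  qed
  have "proj_pi n (theta m p n z) = symmap (n - 1) u"
  proof (rule nth_equalityI)
    show "length (proj_pi n (theta m p n z)) = length (symmap (n - 1) u)"
      by (simp only: proj_len symmap_len)
    fix k assume "k < length (proj_pi n (theta m p n z))"
    then have k: "k < n - 1" by (simp only: proj_len)
    have sk: "Suc k < n" using k by linarith
    have "proj_pi n (theta m p n z) ! k = complex_of_real ((real n - real (Suc k)) / real n) * theta m p n z ! k"
      by (rule proj_nth[OF k])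
    also have "theta m p n z ! k = esym (Suc k) w"
      unfolding w_def by (rule theta_nth[OF sk])
    also have "complex_of_real ((real n - real (Suc k)) / real n) * esym (Suc k) w = esym (Suc k) u"
      by (rule key[of "Suc k", symmetric]) (use sk in auto)
    also have "esym (Suc k) u = symmap (n - 1) u ! k"
      by (rule symmap_nth[OF k, symmetric])
    finally show "proj_pi n (theta m p n z) ! k = symmap (n - 1) u ! k" .
  qed
  then show "y \<in> Gamma_sym (n - 1)" using y ucl by (simp add: Gamma_sym_def)
qed

end
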